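(* Let $S=(s_{ij})$ and $C=(c_{ij})$ be real symmetric $n\times n$ matrices with spectra (counted with multiplicities) $\sigma(S)=(\lambda_1,\ldots,\lambda_n)$ and $\sigma(C)=(\mu_1,\ldots,\mu_n)$, let $0\le\gamma\le1$, and suppose $|c_{ij}|\le s_{ij}$ for all $1\le i,j\le n$. Then $\tfrac12(S+\gamma C)$ and $\tfrac12(S-\gamma C)$ are symmetric nonnegative matrices, and the $2n\times 2n$ block matrices $M_{\pm\gamma}=(M_{ij,\pm\gamma})_{i,j=1}^n$ with $$M_{ij,\pm\gamma}=\begin{pmatrix}\frac{s_{ij}\pm\gamma c_{ij}}{2} & \frac{s_{ij}\mp\gamma c_{ij}}{2}\\ \frac{s_{ij}\mp\gamma c_{ij}}{2} & \frac{s_{ij}\pm\gamma c_{ij}}{2}\end{pmatrix}$$ are symmetric nonnegative matrices realizing, respectively, the lists $(\lambda_1,\ldots,\lambda_n,\pm\gamma\mu_1,\ldots,\pm\gamma\mu_n)$ (with $+$ for $M_{+\gamma}$ and $-$ for $M_{-\gamma}$).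
   Context: A matrix realizes a list of complex numbers if the list is its spectrum counted with multiplicities. Nonnegative means entrywise nonnegative. *)

theory Defs
  imports "Jordan_Normal_Form.Char_Poly"
begin

text \<open>A square matrix realizes a list of complex numbers if the list is its spectrum
  counted with multiplicities, i.e. its characteristic polynomial (over the complex
  numbers) is the product of the linear factors (x - z) for z in the list.\<close>
definition realizes :: "real mat \<Rightarrow> complex list \<Rightarrow> bool" where
  "realizes A zs \<longleftrightarrow> A \<in> carrier_mat (length zs) (length zs) \<and>
     char_poly (map_mat complex_of_real A) = (\<Prod>z\<leftarrow>zs. [:- z, 1:])"

definition sym_mat :: "real mat \<Rightarrow> bool" where
  "sym_mat A \<longleftrightarrow> square_mat A \<and> transpose_mat A = A"

definition nonneg_mat :: "real mat \<Rightarrow> bool" where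
  "nonneg_mat A \<longleftrightarrow> (\<forall>i < dim_row A. \<forall>j < dim_col A. A $$ (i, j) \<ge> 0)"

text \<open>Taking t = gamma gives M_{+gamma}, t = -gamma gives M_{-gamma}.\<close>
definition block_mat :: "real mat \<Rightarrow> real mat \<Rightarrow> real \<Rightarrow> real mat" where
  "block_mat S C t = mat (2 * dim_row S) (2 * dim_row S)
     (\<lambda>(r, k). let i = r div 2; j = k div 2 in
        if r mod 2 = k mod 2 then (S $$ (i, j) + t * C $$ (i, j)) / 2
        else (S $$ (i, j) - t * C $$ (i, j)) / 2)"

end

theory Submission imports Defs begin
lemma sum_pairs: "(\<Sum>l<2*(n::nat). (f::nat \<Rightarrow> 'a::comm_monoid_add) l) = (\<Sum>j<n. f (2*j) + f (2*j+1))"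
  by (induct n) (auto simp: sum.distrib ac_simps)
lemma sum_halves: "(\<Sum>l<2*(n::nat). (f::nat \<Rightarrow> 'a::comm_monoid_add) l) = (\<Sum>l<n. f l) + (\<Sum>l<n. f (n+l))"
proof -
  have "{..<2*n} = {..<n} \<union> {n..<n+n}" by auto
  then have "(\<Sum>l<2*n. f l) = (\<Sum>l<n. f l) + (\<Sum>l\<in>{n..<n+n}. f l)"
    by (metis finite_atLeastLessThan finite_lessThan ivl_disj_int_one(2) sum.union_disjoint)
  also have "(\<Sum>l\<in>{n..<n+n}. f l) = (\<Sum>l<n. f (n+l))"
    using sum.shift_bounds_nat_ivl[of f 0 n n] by (simp add: lessThan_atLeast0 add.commute)
  finally show ?thesis .
qed
lemma mult_entry: "A \<in> carrier_mat a b \<Longrightarrow> B \<in> carrier_mat b c \<Longrightarrow> i<a \<Longrightarrow> j<c \<Longrightarrow>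
  (A*B)$$(i,j) = (\<Sum>l<b. A$$(i,l) * B$$(l,j))"
  by (simp add: scalar_prod_def lessThan_atLeast0)

definition pf :: "nat \<Rightarrow> nat \<Rightarrow> nat \<Rightarrow> real" where
  "pf n r k = (if r < n then (if k div 2 = r then 1 else 0)
     else (if k div 2 = r - n then (if even k then 1 else -1) else 0))"
definition Pm :: "nat \<Rightarrow> real mat" where "Pm n = mat (2*n) (2*n) (\<lambda>(r,k). pf n r k)"
definition Qm :: "nat \<Rightarrow> real mat" where "Qm n = mat (2*n) (2*n) (\<lambda>(r,k). pf n k r / 2)"

lemma Pm_carr[simp]: "Pm n \<in> carrier_mat (2*n) (2*n)" by (simp add: Pm_def)
lemma Qm_carr[simp]: "Qm n \<in> carrier_mat (2*n) (2*n)" by (simp add: Qm_def)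
lemma dims[simp]: "dim_row (Pm n) = 2*n" "dim_col (Pm n) = 2*n" "dim_row (Qm n) = 2*n" "dim_col (Qm n) = 2*n" by (auto simp: Pm_def Qm_def)
lemma Pm_idx[simp]: "r < 2*n \<Longrightarrow> k < 2*n \<Longrightarrow> Pm n $$ (r,k) = pf n r k" by (simp add: Pm_def)
lemma Qm_idx[simp]: "r < 2*n \<Longrightarrow> k < 2*n \<Longrightarrow> Qm n $$ (r,k) = pf n k r / 2" by (simp add: Qm_def)

definition rho :: "nat \<Rightarrow> nat \<Rightarrow> nat" where "rho n r = (if r < n then r else r - n)"
definition sg :: "nat \<Rightarrow> nat \<Rightarrow> real" where "sg n r = (if r < n then 1 else -1)"

lemma pf_even: "pf n r (2*j) = (if j = rho n r then 1 else 0)"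
  by (simp add: pf_def rho_def)
lemma pf_odd: "pf n r (Suc (2*j)) = (if j = rho n r then sg n r else 0)"
  by (simp add: pf_def rho_def sg_def)
lemma pf_gen: "pf n r k = (if k div 2 = rho n r then (if even k then 1 else sg n r) else 0)"
  by (simp add: pf_def rho_def sg_def)

lemma delta2: "(\<Sum>j<(n::nat). (if j = a then x else 0) * (if j = b then y else 0) / 2 + (if j = a then u else 0) * (if j = b then v else 0) / (2::real))
   = (if a = b \<and> a < n then (x*y + u*v)/2 else 0)"
proof -
  have "(\<Sum>j<n. (if j = a then x else 0) * (if j = b then y else 0) / 2 + (if j = a then u else 0) * (if j = b then v else 0) / (2::real))
     = (\<Sum>j<n. if j = a then (if a = b then (x*y+u*v)/2 else 0) else 0)" by (rule sum.cong) (auto simp: field_simps)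
  also have "\<dots> = (if a \<in> {..<n} then (if a = b then (x*y+u*v)/2 else 0) else 0)"
    by (rule sum.delta) simp
  finally show ?thesis by auto
qed

lemma PQ: "Pm n * Qm n = 1\<^sub>m (2*n)"
proof (rule eq_matI)
  fix r k assume r: "r < dim_row (1\<^sub>m (2*n))" and k: "k < dim_col (1\<^sub>m (2*n))"
  then have r: "r < 2*n" and k: "k < 2*n" by auto
  have "(Pm n * Qm n) $$ (r,k) = (\<Sum>j<n. pf n r (2*j) * pf n k (2*j) / 2 + pf n r (Suc (2*j)) * pf n k (Suc (2*j)) / 2)"
    by (simp add: mult_entry[OF Pm_carr Qm_carr r k] sum_pairs r k)
  also have "\<dots> = (if r = k then 1 else 0)"
    unfolding pf_even pf_odd delta2 using r k by (auto simp: rho_def sg_def)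
  finally show "(Pm n * Qm n) $$ (r,k) = 1\<^sub>m (2*n) $$ (r,k)" using r k by simp
qed auto

lemma QP: "Qm n * Pm n = 1\<^sub>m (2*n)"
proof (rule eq_matI)
  fix r k assume r: "r < dim_row (1\<^sub>m (2*n))" and k: "k < dim_col (1\<^sub>m (2*n))"
  then have r: "r < 2*n" and k: "k < 2*n" by auto
  have "(Qm n * Pm n) $$ (r,k) = (\<Sum>l<n. pf n l r * pf n l k / 2) + (\<Sum>l<n. pf n (n+l) r * pf n (n+l) k / 2)"
    by (simp add: mult_entry[OF Qm_carr Pm_carr r k] sum_halves r k)
  also have "\<dots> = (if r = k then 1 else 0)"
  proof -
    have 1: "(\<Sum>l<n. pf n l r * pf n l k / 2) = (\<Sum>l<n. if l = r div 2 then (if l = k div 2 then 1/2 else 0) else 0)"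
      by (rule sum.cong) (auto simp: pf_def)
    have 2: "(\<Sum>l<n. pf n (n+l) r * pf n (n+l) k / 2) = (\<Sum>l<n. if l = r div 2 then (if l = k div 2 then
         (if even r then 1 else -1) * (if even k then 1 else -1) / 2 else 0) else 0)"
      by (rule sum.cong) (auto simp: pf_def)
    have rk: "r div 2 < n" "k div 2 < n" using r k by auto
    have "r = k \<longleftrightarrow> r div 2 = k div 2 \<and> (even r \<longleftrightarrow> even k)" by presburger
    then show ?thesis unfolding 1 2 using rk by (auto simp: sum.delta)
  qed
  finally show "(Qm n * Pm n) $$ (r,k) = 1\<^sub>m (2*n) $$ (r,k)" using r k by simp
qed auto


definition Dm :: "real mat \<Rightarrow> real mat \<Rightarrow> real \<Rightarrow> nat \<Rightarrow> real mat" where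
  "Dm S C t n = four_block_mat S (0\<^sub>m n n) (0\<^sub>m n n) (t \<cdot>\<^sub>m C)"

lemma Dm_carr: "S \<in> carrier_mat n n \<Longrightarrow> C \<in> carrier_mat n n \<Longrightarrow> Dm S C t n \<in> carrier_mat (2*n) (2*n)"
  unfolding Dm_def by (simp add: mult_2)

lemma M_carr: "S \<in> carrier_mat n n \<Longrightarrow> block_mat S C t \<in> carrier_mat (2*n) (2*n)"
  unfolding block_mat_def by simp

lemma M_idx: "S \<in> carrier_mat n n \<Longrightarrow> r < 2*n \<Longrightarrow> k < 2*n \<Longrightarrow> block_mat S C t $$ (r,k) =
  (if r mod 2 = k mod 2 then (S $$ (r div 2, k div 2) + t * C $$ (r div 2, k div 2)) / 2
        else (S $$ (r div 2, k div 2) - t * C $$ (r div 2, k div 2)) / 2)"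
  unfolding block_mat_def by (simp add: Let_def)

lemma PM_DP: assumes S: "S \<in> carrier_mat n n" and C: "C \<in> carrier_mat n n"
  shows "Pm n * block_mat S C t = Dm S C t n * Pm n"
proof (rule eq_matI)
  have M: "block_mat S C t \<in> carrier_mat (2*n) (2*n)" by (rule M_carr[OF S])
  have D: "Dm S C t n \<in> carrier_mat (2*n) (2*n)" by (rule Dm_carr[OF S C])
  fix r k assume r: "r < dim_row (Dm S C t n * Pm n)" and k: "k < dim_col (Dm S C t n * Pm n)"
  then have r: "r < 2*n" and k: "k < 2*n" using D by auto
  have rn: "rho n r < n" using r by (auto simp: rho_def)
  have kn: "k div 2 < n" using k by auto
  have "(Pm n * block_mat S C t) $$ (r,k) = (\<Sum>j<n. pf n r (2*j) * block_mat S C t $$ (2*j,k)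
      + pf n r (Suc (2*j)) * block_mat S C t $$ (Suc (2*j),k))"
    by (simp add: mult_entry[OF Pm_carr M r k] sum_pairs r k)
  also have "\<dots> = (\<Sum>j<n. if j = rho n r then block_mat S C t $$ (2*j,k) + sg n r * block_mat S C t $$ (Suc (2*j),k) else 0)"
    by (rule sum.cong) (auto simp: pf_even pf_odd)
  also have "\<dots> = block_mat S C t $$ (2*rho n r,k) + sg n r * block_mat S C t $$ (Suc (2*rho n r),k)"
    using rn by (subst sum.delta) auto
  also have "\<dots> = (if r < n then S $$ (r, k div 2) else (if even k then 1 else -1) * (t * C $$ (r - n, k div 2)))"
    using rn k by (auto simp: M_idx[OF S] rho_def sg_def field_simps)
  finally have L: "(Pm n * block_mat S C t) $$ (r,k) = \<dots>" .
  have "(Dm S C t n * Pm n) $$ (r,k) = (\<Sum>l<n. Dm S C t n $$ (r,l) * pf n l k) + (\<Sum>l<n. Dm S C t n $$ (r,n+l) * pf n (n+l) k)"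
    by (simp add: mult_entry[OF D Pm_carr r k] sum_halves r k)
  also have "\<dots> = (\<Sum>l<n. if l = k div 2 then (if r < n then S $$ (r, l) else 0) else 0) +
     (\<Sum>l<n. if l = k div 2 then (if r < n then 0 else (if even k then 1 else -1) * (t * C $$ (r - n, l))) else 0)"
    using r S C by (intro arg_cong2[where f="(+)"] sum.cong) (auto simp: Dm_def pf_def)
  also have "\<dots> = (if r < n then S $$ (r, k div 2) else (if even k then 1 else -1) * (t * C $$ (r - n, k div 2)))"
    using kn by (simp add: sum.delta)
  finally show "(Pm n * block_mat S C t) $$ (r,k) = (Dm S C t n * Pm n) $$ (r,k)" using L by simp
qed (use carrier_matD[OF Dm_carr[OF S C, of t]] carrier_matD[OF M_carr[OF S, of C t]] in simp_all)


lemma cpm_idx: "A \<in> carrier_mat n n \<Longrightarrow> i < n \<Longrightarrow> j < n \<Longrightarrow>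
  char_poly_matrix A $$ (i,j) = (if i = j then [:0,1:] else 0) + [:- A $$ (i,j):]"
  by (simp add: char_poly_matrix_def)

lemma cp_block: fixes A :: "'a::idom mat" assumes A: "A \<in> carrier_mat n n" and B: "B \<in> carrier_mat m m"
  shows "char_poly (four_block_mat A (0\<^sub>m n m) (0\<^sub>m m n) B) = char_poly A * char_poly B"
proof -
  have F: "four_block_mat A (0\<^sub>m n m) (0\<^sub>m m n) B \<in> carrier_mat (n+m) (n+m)" using A B by simp
  have eq: "char_poly_matrix (four_block_mat A (0\<^sub>m n m) (0\<^sub>m m n) B) =
    four_block_mat (char_poly_matrix A) (0\<^sub>m n m) (0\<^sub>m m n) (char_poly_matrix B)"
  proof (rule eq_matI)
    fix i j assume i: "i < dim_row (four_block_mat (char_poly_matrix A) (0\<^sub>m n m) (0\<^sub>m m n) (char_poly_matrix B))"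
      and j: "j < dim_col (four_block_mat (char_poly_matrix A) (0\<^sub>m n m) (0\<^sub>m m n) (char_poly_matrix B))"
    have ij: "\<not> i < n \<Longrightarrow> \<not> j < n \<Longrightarrow> (i - n = j - n) = (i = j)" by arith
    from i j have i: "i < n+m" and j: "j < n+m" using char_poly_matrix_closed[OF A] char_poly_matrix_closed[OF B] by auto
    show "char_poly_matrix (four_block_mat A (0\<^sub>m n m) (0\<^sub>m m n) B) $$ (i,j) =
      four_block_mat (char_poly_matrix A) (0\<^sub>m n m) (0\<^sub>m m n) (char_poly_matrix B) $$ (i,j)"
      unfolding cpm_idx[OF F i j] using A B i j carrier_matD[OF char_poly_matrix_closed[OF A]] carrier_matD[OF char_poly_matrix_closed[OF B]] by (cases "i<n"; cases "j<n") (simp_all add: cpm_idx ij)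
  qed (use F carrier_matD[OF char_poly_matrix_closed[OF A]] carrier_matD[OF char_poly_matrix_closed[OF B]] carrier_matD[OF char_poly_matrix_closed[OF F]] in auto)
  have "det (four_block_mat (char_poly_matrix A) (0\<^sub>m n m) (0\<^sub>m m n) (char_poly_matrix B)) = det (char_poly_matrix A) * det (char_poly_matrix B)"
    by (rule det_four_block_mat_upper_right_zero) (use A B in auto)
  then show ?thesis unfolding char_poly_def eq .
qed
lemma deg_lin: "degree (\<Prod>z\<leftarrow>zs. [:- (z::'a::idom), 1:]) = length zs"
proof (induct zs)
  case (Cons a zs)
  have nz: "(\<Prod>z\<leftarrow>zs. [:- z, 1:]) \<noteq> 0" by (auto simp: prod_list_zero_iff)
  show ?case using Cons degree_mult_eq[OF _ nz, of "[:-a,1:]"] by simp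
qed simp

lemma poly_prod_list_linear: "poly (\<Prod>z\<leftarrow>zs. [:- z, 1:]) x = (\<Prod>z\<leftarrow>zs. x - (z::'a::comm_ring_1))"
  by (induct zs) (auto simp: algebra_simps)

lemma char_poly_smult_lin: fixes A :: "complex mat"
  assumes A: "A \<in> carrier_mat n n" and cp: "char_poly A = (\<Prod>z\<leftarrow>zs. [:- z, 1:])"
  shows "char_poly (k \<cdot>\<^sub>m A) = (\<Prod>z\<leftarrow>zs. [:- (k*z), 1:])"
proof -
  have len: "length zs = n" using degree_monic_char_poly[OF A] by (simp add: cp deg_lin)
  have kA: "k \<cdot>\<^sub>m A \<in> carrier_mat n n" using A by simp
  show ?thesis
  proof (rule poly_ext)
    fix x
    have l: "poly (char_poly (k \<cdot>\<^sub>m A)) x = det (- char_matrix (k \<cdot>\<^sub>m A) x)"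
      by (rule char_poly_matrix[OF kA])
    show "poly (char_poly (k \<cdot>\<^sub>m A)) x = poly (\<Prod>z\<leftarrow>zs. [:- (k*z), 1:]) x"
    proof (cases "k = 0")
      case True
      have "- char_matrix (k \<cdot>\<^sub>m A) x = x \<cdot>\<^sub>m 1\<^sub>m n"
        by (rule eq_matI) (use A True in \<open>auto simp: char_matrix_def\<close>)
      then have "det (- char_matrix (k \<cdot>\<^sub>m A) x) = x ^ n" by simp
      moreover have "poly (\<Prod>z\<leftarrow>zs. [:- (k*z), 1:]) x = x ^ length zs"
        using True by (induct zs) (auto simp: poly_prod_list)
      ultimately show ?thesis using l len by simp
    next
      case False
      have "- char_matrix (k \<cdot>\<^sub>m A) x = k \<cdot>\<^sub>m (- char_matrix A (x/k))"
        by (rule eq_matI) (use A False in \<open>auto simp: char_matrix_def algebra_simps\<close>)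
      then have "det (- char_matrix (k \<cdot>\<^sub>m A) x) = k ^ n * poly (char_poly A) (x/k)"
        using char_poly_matrix[OF A] A by (simp add: char_matrix_def)
      also have "\<dots> = k ^ length zs * (\<Prod>z\<leftarrow>zs. x/k - z)" unfolding cp len[symmetric]
        by (simp add: poly_prod_list_linear)
      also have "\<dots> = (\<Prod>z\<leftarrow>zs. x - k*z)" 
      proof (induct zs)
        case (Cons a zs)
        have e: "x - k * a = k * (x/k - a)" using False by (simp add: algebra_simps)
        show ?case using Cons by (simp only: list.map prod_list.Cons list.size power_Suc e) (simp add: ac_simps)
      qed simp
      also have "\<dots> = poly (\<Prod>z\<leftarrow>zs. [:- (k*z), 1:]) x"
        by (induct zs) (auto simp: algebra_simps)
      finally show ?thesis using l by simp
    qed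
  qed
qed

lemma cp_M: assumes S: "S \<in> carrier_mat n n" and C: "C \<in> carrier_mat n n"
  shows "char_poly (block_mat S C t) = char_poly S * char_poly (t \<cdot>\<^sub>m C)"
proof -
  have M: "block_mat S C t \<in> carrier_mat (2*n) (2*n)" by (rule M_carr[OF S])
  have D: "Dm S C t n \<in> carrier_mat (2*n) (2*n)" by (rule Dm_carr[OF S C])
  have "Qm n * Dm S C t n * Pm n = Qm n * (Pm n * block_mat S C t)"
    using PM_DP[OF S C, of t] by (simp add: assoc_mult_mat[OF Qm_carr D Pm_carr])
  also have "\<dots> = (Qm n * Pm n) * block_mat S C t"
    by (rule assoc_mult_mat[OF Qm_carr Pm_carr M, symmetric])
  also have "\<dots> = block_mat S C t" unfolding QP by (rule left_mult_one_mat[OF M])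
  finally have e: "block_mat S C t = Qm n * Dm S C t n * Pm n" by simp
  have "similar_mat (block_mat S C t) (Dm S C t n)"
    by (rule similar_matI[of _ _ "Qm n" "Pm n" "2*n"]) (use M D QP PQ e in auto)
  then have "char_poly (block_mat S C t) = char_poly (Dm S C t n)" by (rule char_poly_similar)
  also have "\<dots> = char_poly S * char_poly (t \<cdot>\<^sub>m C)"
    unfolding Dm_def by (rule cp_block[OF S]) (use C in simp)
  finally show ?thesis .
qed

lemma real_M: assumes S: "S \<in> carrier_mat n n" and C: "C \<in> carrier_mat n n"
  and rS: "realizes S lam" and rC: "realizes C mu"
  shows "realizes (block_mat S C t) (lam @ map (\<lambda>z. complex_of_real t * z) mu)"
proof -
  interpret mh: map_poly_comm_ring_hom "of_real :: real \<Rightarrow> complex" ..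
  have ll: "length lam = n" "length mu = n" using S C rS rC unfolding realizes_def by auto
  have cS: "char_poly (map_mat complex_of_real S) = (\<Prod>z\<leftarrow>lam. [:- z, 1:])" using rS unfolding realizes_def by simp
  have cC: "char_poly (map_mat complex_of_real C) = (\<Prod>z\<leftarrow>mu. [:- z, 1:])" using rC unfolding realizes_def by simp
  have M: "block_mat S C t \<in> carrier_mat (2*n) (2*n)" by (rule M_carr[OF S])
  have tC: "map_mat complex_of_real (t \<cdot>\<^sub>m C) = complex_of_real t \<cdot>\<^sub>m map_mat complex_of_real C"
    by (rule eq_matI) auto
  have "char_poly (map_mat complex_of_real (block_mat S C t)) = map_poly complex_of_real (char_poly (block_mat S C t))"
    by (rule of_real_hom.char_poly_hom[OF M])
  also have "\<dots> = map_poly complex_of_real (char_poly S) * map_poly complex_of_real (char_poly (t \<cdot>\<^sub>m C))"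
    unfolding cp_M[OF S C] by (rule mh.hom_mult)
  also have "\<dots> = char_poly (map_mat complex_of_real S) * char_poly (map_mat complex_of_real (t \<cdot>\<^sub>m C))"
  proof -
    have a: "char_poly (map_mat complex_of_real S) = map_poly complex_of_real (char_poly S)"
      by (rule of_real_hom.char_poly_hom[OF S])
    have b: "char_poly (map_mat complex_of_real (t \<cdot>\<^sub>m C)) = map_poly complex_of_real (char_poly (t \<cdot>\<^sub>m C))"
      by (rule of_real_hom.char_poly_hom[OF smult_carrier_mat[OF C]])
    show ?thesis unfolding a b ..
  qed
  also have "\<dots> = (\<Prod>z\<leftarrow>lam. [:- z, 1:]) * (\<Prod>z\<leftarrow>mu. [:- (complex_of_real t * z), 1:])"
    unfolding tC cS by (rule arg_cong[where f="\<lambda>x. _ * x"], rule char_poly_smult_lin[OF _ cC]) (use C in simp)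
  also have "\<dots> = (\<Prod>z\<leftarrow>lam @ map (\<lambda>z. complex_of_real t * z) mu. [:- z, 1:])"
    by (simp add: o_def)
  finally show ?thesis unfolding realizes_def using M ll by (simp add: mult_2)
qed


lemma symI: "X \<in> carrier_mat n n \<Longrightarrow> (\<And>i j. i<n \<Longrightarrow> j<n \<Longrightarrow> X$$(j,i) = X$$(i,j)) \<Longrightarrow> sym_mat X"
  unfolding sym_mat_def by (auto intro!: eq_matI)
lemma symD: "sym_mat X \<Longrightarrow> X \<in> carrier_mat n n \<Longrightarrow> i<n \<Longrightarrow> j<n \<Longrightarrow> X$$(j,i) = X$$(i,j)"
  unfolding sym_mat_def by (metis carrier_matD(1) carrier_matD(2) index_transpose_mat(1))

lemma bnd: assumes "\<bar>t\<bar> \<le> (1::real)" "\<bar>c\<bar> \<le> s" shows "0 \<le> s + t * c" "0 \<le> s - t * c"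
proof -
  have "\<bar>t * c\<bar> \<le> \<bar>c\<bar>" unfolding abs_mult using assms(1) by (simp add: mult_left_le_one_le)
  then show "0 \<le> s + t * c" "0 \<le> s - t * c" using assms(2) by (auto simp: abs_le_iff)
qed

lemma half_props: assumes S: "S \<in> carrier_mat n n" and C: "C \<in> carrier_mat n n"
    and sS: "sym_mat S" and sC: "sym_mat C" and t: "\<bar>t\<bar> \<le> 1"
    and le: "\<forall>i < n. \<forall>j < n. \<bar>C $$ (i, j)\<bar> \<le> S $$ (i, j)"
  shows "sym_mat ((1/2) \<cdot>\<^sub>m (S + t \<cdot>\<^sub>m C)) \<and> nonneg_mat ((1/2) \<cdot>\<^sub>m (S + t \<cdot>\<^sub>m C))"
proof
  have X: "(1/2) \<cdot>\<^sub>m (S + t \<cdot>\<^sub>m C) \<in> carrier_mat n n" using S C by simp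
  show "sym_mat ((1/2) \<cdot>\<^sub>m (S + t \<cdot>\<^sub>m C))"
    by (rule symI[OF X]) (use S C symD[OF sS S] symD[OF sC C] in simp)
  show "nonneg_mat ((1/2) \<cdot>\<^sub>m (S + t \<cdot>\<^sub>m C))" unfolding nonneg_mat_def
    using S C le bnd(1)[OF t] by auto
qed

lemma block_props: assumes S: "S \<in> carrier_mat n n" and C: "C \<in> carrier_mat n n"
    and sS: "sym_mat S" and sC: "sym_mat C" and t: "\<bar>t\<bar> \<le> 1"
    and le: "\<forall>i < n. \<forall>j < n. \<bar>C $$ (i, j)\<bar> \<le> S $$ (i, j)"
  shows "sym_mat (block_mat S C t) \<and> nonneg_mat (block_mat S C t)"
proof
  have M: "block_mat S C t \<in> carrier_mat (2*n) (2*n)" by (rule M_carr[OF S])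
  show "sym_mat (block_mat S C t)"
  proof (rule symI[OF M])
    fix i j assume i: "i < 2*n" and j: "j < 2*n"
    then have "i div 2 < n" "j div 2 < n" by auto
    then show "block_mat S C t $$ (j, i) = block_mat S C t $$ (i, j)"
      using i j by (simp add: M_idx[OF S] symD[OF sS S] symD[OF sC C])
  qed
  show "nonneg_mat (block_mat S C t)" unfolding nonneg_mat_def
  proof (intro allI impI)
    fix i j assume i: "i < dim_row (block_mat S C t)" and j: "j < dim_col (block_mat S C t)"
    then have i: "i < 2*n" and j: "j < 2*n" using M by auto
    then have "i div 2 < n" "j div 2 < n" by auto
    then have "0 \<le> S $$ (i div 2, j div 2) + t * C $$ (i div 2, j div 2)"
      "0 \<le> S $$ (i div 2, j div 2) - t * C $$ (i div 2, j div 2)"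
      using bnd[OF t] le by auto
    then show "0 \<le> block_mat S C t $$ (i, j)" using i j by (simp add: M_idx[OF S])
  qed
qed

theorem corollary1:
  fixes S C :: "real mat" and n :: nat and \<gamma> :: real
    and lam mu :: "complex list"
  assumes "S \<in> carrier_mat n n" and "C \<in> carrier_mat n n"
    and "sym_mat S" and "sym_mat C"
    and "realizes S lam" and "realizes C mu"
    and "0 \<le> \<gamma>" and "\<gamma> \<le> 1"
    and "\<forall>i < n. \<forall>j < n. \<bar>C $$ (i, j)\<bar> \<le> S $$ (i, j)"
  shows "sym_mat ((1/2) \<cdot>\<^sub>m (S + \<gamma> \<cdot>\<^sub>m C)) \<and> nonneg_mat ((1/2) \<cdot>\<^sub>m (S + \<gamma> \<cdot>\<^sub>m C))
       \<and> sym_mat ((1/2) \<cdot>\<^sub>m (S - \<gamma> \<cdot>\<^sub>m C)) \<and> nonneg_mat ((1/2) \<cdot>\<^sub>m (S - \<gamma> \<cdot>\<^sub>m C))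
       \<and> sym_mat (block_mat S C \<gamma>) \<and> nonneg_mat (block_mat S C \<gamma>)
       \<and> realizes (block_mat S C \<gamma>) (lam @ map (\<lambda>z. complex_of_real \<gamma> * z) mu)
       \<and> sym_mat (block_mat S C (- \<gamma>)) \<and> nonneg_mat (block_mat S C (- \<gamma>))
       \<and> realizes (block_mat S C (- \<gamma>)) (lam @ map (\<lambda>z. - complex_of_real \<gamma> * z) mu)"
proof -
  have t1: "\<bar>\<gamma>\<bar> \<le> 1" and t2: "\<bar>- \<gamma>\<bar> \<le> 1" using assms(7,8) by auto
  have minus: "S - \<gamma> \<cdot>\<^sub>m C = S + (- \<gamma>) \<cdot>\<^sub>m C"
    by (rule eq_matI) (use assms(1,2) in auto)
  have r2: "realizes (block_mat S C (- \<gamma>)) (lam @ map (\<lambda>z. complex_of_real (- \<gamma>) * z) mu)"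
    by (rule real_M[OF assms(1,2,5,6)])
  show ?thesis
    using half_props[OF assms(1-4) t1 assms(9)] half_props[OF assms(1-4) t2 assms(9)]
      block_props[OF assms(1-4) t1 assms(9)] block_props[OF assms(1-4) t2 assms(9)]
      real_M[OF assms(1,2,5,6), of \<gamma>] r2 minus by simp
qed

end
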